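(* Let $\epsilon\ge 0$ and let $\mathcal{G}$ be a weighted congestion game with latency functions $\ell_e(x)=\alpha_e x$, $\alpha_e\ge 0$. Define, for every strategy profile $S=(s_1,\dots,s_n)$, $$\Phi_\epsilon(S)=\frac12\sum_{e\in E}\alpha_e L_e(S)^2+\frac12\cdot\frac{1-\epsilon}{1+\epsilon}\sum_{e\in E}\sum_{i:\,e\in s_i}\alpha_e w_i^2 .$$ If $S$ is a local minimum of $\Phi_\epsilon$, i.e., $\Phi_\epsilon(S)\le\Phi_\epsilon(S_{-i}\diamond t)$ for every $i\in[n]$ and every $t\in\Sigma_i$, then $S$ is an $\epsilon$-PNE.
   Context: A weighted congestion game consists of a finite set $[n]=\{1,\dots,n\}$ of players, a finite set $E$ of resources, for each player $i$ a weight $w_i>0$ and a nonempty finite strategy set $\Sigma_i\subseteq 2^E$, and for each resource $e$ a latency function $\ell_e:\mathbb{R}_{\ge 0}\to\mathbb{R}_{\ge 0}$. For a strategy profile $S=(s_1,\dots,s_n)\in\prod_i\Sigma_i$, the congestion of $e$ is $L_e(S)=\sum_{i:\,e\in s_i}w_i$ and the cost of player $i$ is $c_i(S)=\sum_{e\in s_i}\ell_e(L_e(S))$. For $t\in\Sigma_i$, $(S_{-i}\diamond t)$ denotes the profile obtained from $S$ by replacing $s_i$ with $t$. For $\epsilon\ge 0$, $S$ is an $\epsilon$-approximate pure Nash equilibrium ($\epsilon$-PNE) if $c_i(S)\le(1+\epsilon)c_i(S_{-i}\diamond t)$ for all $i\in[n]$ and all $t\in\Sigma_i$. *)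

theory Defs
  imports Complex_Main
begin

text \<open>A strategy profile is a function
  S :: nat => 'e set (only values at players 1..n matter). The deviation
  (S_{-i} <> t) is the function update S(i := t).\<close>

definition weighted_congestion_game ::
  "nat \<Rightarrow> 'e set \<Rightarrow> (nat \<Rightarrow> real) \<Rightarrow> (nat \<Rightarrow> 'e set set) \<Rightarrow> ('e \<Rightarrow> real \<Rightarrow> real) \<Rightarrow> bool" where
  "weighted_congestion_game n E w Strat lat \<longleftrightarrow>
     finite E \<and>
     (\<forall>i\<in>{1..n}. w i > 0 \<and> Strat i \<noteq> {} \<and> finite (Strat i) \<and> (\<forall>s\<in>Strat i. s \<subseteq> E)) \<and>
     (\<forall>e\<in>E. \<forall>x\<ge>0. lat e x \<ge> 0)"

definition is_profile :: "nat \<Rightarrow> (nat \<Rightarrow> 'e set set) \<Rightarrow> (nat \<Rightarrow> 'e set) \<Rightarrow> bool" where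
  "is_profile n Strat S \<longleftrightarrow> (\<forall>i\<in>{1..n}. S i \<in> Strat i)"

definition congestion :: "nat \<Rightarrow> (nat \<Rightarrow> real) \<Rightarrow> (nat \<Rightarrow> 'e set) \<Rightarrow> 'e \<Rightarrow> real" where
  "congestion n w S e = (\<Sum>i\<in>{i\<in>{1..n}. e \<in> S i}. w i)"

definition player_cost ::
  "nat \<Rightarrow> (nat \<Rightarrow> real) \<Rightarrow> ('e \<Rightarrow> real \<Rightarrow> real) \<Rightarrow> (nat \<Rightarrow> 'e set) \<Rightarrow> nat \<Rightarrow> real" where
  "player_cost n w lat S i = (\<Sum>e\<in>S i. lat e (congestion n w S e))"

definition approx_PNE ::
  "real \<Rightarrow> nat \<Rightarrow> (nat \<Rightarrow> real) \<Rightarrow> (nat \<Rightarrow> 'e set set) \<Rightarrow> ('e \<Rightarrow> real \<Rightarrow> real) \<Rightarrow> (nat \<Rightarrow> 'e set) \<Rightarrow> bool" where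
  "approx_PNE \<epsilon> n w Strat lat S \<longleftrightarrow>
     (\<forall>i\<in>{1..n}. \<forall>t\<in>Strat i.
        player_cost n w lat S i \<le> (1 + \<epsilon>) * player_cost n w lat (S(i := t)) i)"

definition Phi_eps ::
  "real \<Rightarrow> nat \<Rightarrow> 'e set \<Rightarrow> (nat \<Rightarrow> real) \<Rightarrow> ('e \<Rightarrow> real) \<Rightarrow> (nat \<Rightarrow> 'e set) \<Rightarrow> real" where
  "Phi_eps \<epsilon> n E w \<alpha> S =
     1/2 * (\<Sum>e\<in>E. \<alpha> e * (congestion n w S e)^2)
     + 1/2 * ((1 - \<epsilon>) / (1 + \<epsilon>)) *
         (\<Sum>e\<in>E. \<Sum>i\<in>{i\<in>{1..n}. e \<in> S i}. \<alpha> e * (w i)^2)"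

end

theory Submission
  imports Defs
begin
lemma pw:
  fixes a L L' W \<epsilon> :: real
  assumes "a \<ge> 0" "L \<ge> 0" "W > 0" "\<epsilon> \<ge> 0" "bs \<longrightarrow> W \<le> L"
    "L' = L - (if bs then W else 0) + (if bt then W else 0)"
  shows "(if bs then a*L else 0) - (1+\<epsilon>)*(if bt then a*L' else 0) \<le>
    -((1+\<epsilon>)/W) * (1/2*a*(L'^2 - L^2) + 1/2*((1-\<epsilon>)/(1+\<epsilon>))*((if bt then a*W^2 else 0) - (if bs then a*W^2 else 0)))"
proof -
  have e: "1+\<epsilon> > 0" using assms by simp
  have e2: "1+\<epsilon> \<noteq> 0" "\<epsilon>+1 \<noteq> 0" "W \<noteq> 0" using assms by auto
  have ea: "0 \<le> \<epsilon>*a" using assms(1,4) by simp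
  show ?thesis
  proof (cases bs; cases bt)
    assume b: "bs" "bt"
    have h: "0 \<le> \<epsilon>*(a*L)" using assms(1,2,4) by simp
    have h2: "(1+\<epsilon>)*(a*L) = a*L + \<epsilon>*(a*L)" by (simp add: distrib_right)
    have "a*L \<le> (1+\<epsilon>)*(a*L)" using h h2 by linarith
    moreover have "L' = L" using assms(6) b by simp
    ultimately show ?thesis using b by simp
  next
    assume "\<not>bs" "\<not>bt" thus ?thesis using assms by simp
  next
    assume b: "bs" "\<not>bt"
    have WL: "W \<le> L" using assms(5) b by simp
    have h1: "\<epsilon>*a*W \<le> \<epsilon>*a*L" using mult_left_mono[OF WL ea] .
    have h2: "(1+\<epsilon>)*a*L = a*L + \<epsilon>*a*L" by (simp add: distrib_right)
    have "a*L \<le> (1+\<epsilon>)*a*L - \<epsilon>*a*W" using h1 h2 by linarith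
    moreover have "-((1+\<epsilon>)/W) * (1/2*a*((L-W)^2 - L^2) + 1/2*((1-\<epsilon>)/(1+\<epsilon>))*(0 - a*W^2)) = (1+\<epsilon>)*a*L - \<epsilon>*a*W"
    proof -
      define c where "c = (1-\<epsilon>)/(1+\<epsilon>)"
      have c: "(1+\<epsilon>)*c = 1-\<epsilon>" using e2 by (simp add: c_def)
      have q: "(L-W)^2 - L^2 = W*(W - 2*L)" by (simp add: power2_eq_square algebra_simps)
      have "-((1+\<epsilon>)/W) * (1/2*a*((L-W)^2 - L^2) + 1/2*c*(0 - a*W^2))
          = -((1+\<epsilon>)/W) * (W * (1/2*a*(W-2*L) - 1/2*c*a*W))"
        unfolding q by (simp add: power2_eq_square algebra_simps)
      also have "\<dots> = -((1+\<epsilon>) * (1/2*a*(W-2*L) - 1/2*c*a*W))" using e2 by simp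
      also have "\<dots> = -(1+\<epsilon>) * (1/2*a*(W-2*L)) + 1/2*((1+\<epsilon>)*c)*a*W" by (simp add: field_simps)
      also have "\<dots> = (1+\<epsilon>)*a*L - \<epsilon>*a*W" unfolding c by (simp add: field_simps)
      finally show ?thesis by (simp add: c_def)
    qed
    moreover have "L' = L - W" using assms(6) b by simp
    ultimately show ?thesis using b by simp
  next
    assume b: "\<not>bs" "bt"
    have h0: "0 \<le> \<epsilon>*a*W" using ea assms(3) by simp
    have h2: "(1+\<epsilon>)*(a*(L+W)) = (1+\<epsilon>)*a*L + a*W + \<epsilon>*a*W" by (simp add: field_simps)
    have "-((1+\<epsilon>)*(a*(L+W))) \<le> -(1+\<epsilon>)*a*L - a*W" using h0 h2 by linarith
    moreover have "-((1+\<epsilon>)/W) * (1/2*a*((L+W)^2 - L^2) + 1/2*((1-\<epsilon>)/(1+\<epsilon>))*(a*W^2 - 0)) = -(1+\<epsilon>)*a*L - a*W"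
    proof -
      define c where "c = (1-\<epsilon>)/(1+\<epsilon>)"
      have c: "(1+\<epsilon>)*c = 1-\<epsilon>" using e2 by (simp add: c_def)
      have q: "(L+W)^2 - L^2 = W*(W + 2*L)" by (simp add: power2_eq_square algebra_simps)
      have "-((1+\<epsilon>)/W) * (1/2*a*((L+W)^2 - L^2) + 1/2*c*(a*W^2 - 0))
          = -((1+\<epsilon>)/W) * (W * (1/2*a*(W+2*L) + 1/2*c*a*W))"
        unfolding q by (simp add: power2_eq_square algebra_simps)
      also have "\<dots> = -((1+\<epsilon>) * (1/2*a*(W+2*L) + 1/2*c*a*W))" using e2 by simp
      also have "\<dots> = -(1+\<epsilon>) * (1/2*a*(W+2*L)) - 1/2*((1+\<epsilon>)*c)*a*W" by (simp add: field_simps)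
      also have "\<dots> = -(1+\<epsilon>)*a*L - a*W" unfolding c by (simp add: field_simps)
      finally show ?thesis by (simp add: c_def)
    qed
    moreover have "L' = L + W" using assms(6) b by simp
    ultimately show ?thesis using b by simp
  qed
qed
lemma sum_upd:
  fixes f :: "nat \<Rightarrow> real"
  assumes "i \<in> {1..n}"
  shows "sum f {j\<in>{1..n}. e \<in> (S(i:=t)) j} = sum f {j\<in>{1..n}. e \<in> S j} - (if e \<in> S i then f i else 0) + (if e \<in> t then f i else 0)"
proof -
  let ?A = "{j\<in>{1..n}. e \<in> S j}" and ?B = "{j\<in>{1..n}. e \<in> (S(i:=t)) j}"
  have AB: "?B - {i} = ?A - {i}" by auto
  have fA: "finite ?A" "finite ?B" by auto
  have "sum f (?A - {i}) = sum f ?A - (if e \<in> S i then f i else 0)"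
    using sum_diff1[OF fA(1), of f i] assms by auto
  moreover have "sum f (?B - {i}) = sum f ?B - (if e \<in> t then f i else 0)"
    using sum_diff1[OF fA(2), of f i] assms by auto
  moreover have "sum f (?B - {i}) = sum f (?A - {i})" using AB by simp
  ultimately show ?thesis by linarith
qed

theorem mainTheorem5:
  fixes \<epsilon> :: real and n :: nat and E :: "'e set" and w :: "nat \<Rightarrow> real"
    and Strat :: "nat \<Rightarrow> 'e set set" and \<alpha> :: "'e \<Rightarrow> real" and S :: "nat \<Rightarrow> 'e set"
  assumes eps: "\<epsilon> \<ge> 0"
    and alpha: "\<forall>e\<in>E. \<alpha> e \<ge> 0"
    and game: "weighted_congestion_game n E w Strat (\<lambda>e x. \<alpha> e * x)"
    and prof: "is_profile n Strat S"
    and locmin: "\<forall>i\<in>{1..n}. \<forall>t\<in>Strat i. Phi_eps \<epsilon> n E w \<alpha> S \<le> Phi_eps \<epsilon> n E w \<alpha> (S(i := t))"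
  shows "approx_PNE \<epsilon> n w Strat (\<lambda>e x. \<alpha> e * x) S"
  unfolding approx_PNE_def player_cost_def
proof (intro ballI)
  fix i t assume i: "i \<in> {1..n}" and t: "t \<in> Strat i"
  have fE: "finite E" and wpos: "\<forall>j\<in>{1..n}. w j > 0" and sub: "\<forall>j\<in>{1..n}. \<forall>s\<in>Strat j. s \<subseteq> E"
    using game unfolding weighted_congestion_game_def by auto
  have si: "S i \<in> Strat i" using prof i unfolding is_profile_def by auto
  have sE: "S i \<subseteq> E" and tE: "t \<subseteq> E" using sub i si t by auto
  have wi: "w i > 0" using wpos i by auto
  define L where "L = congestion n w S"
  define L' where "L' = congestion n w (S(i:=t))"
  define c where "c = (1-\<epsilon>)/(1+\<epsilon>)"
  have Lnn: "L e \<ge> 0" for e unfolding L_def congestion_def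
    by (rule sum_nonneg) (use wpos in \<open>fastforce intro: less_imp_le\<close>)
  have Lge: "e \<in> S i \<Longrightarrow> w i \<le> L e" for e unfolding L_def congestion_def
    by (rule member_le_sum) (use wpos i in \<open>fastforce intro: less_imp_le\<close>)+
  have LL: "L' e = L e - (if e \<in> S i then w i else 0) + (if e \<in> t then w i else 0)" for e
    unfolding L_def L'_def congestion_def by (rule sum_upd[OF i])
  define Q where "Q = (\<lambda>S e. \<Sum>j\<in>{j\<in>{1..n}. e \<in> S j}. \<alpha> e * (w j)^2)"
  have QQ: "Q (S(i:=t)) e = Q S e - (if e \<in> S i then \<alpha> e * (w i)^2 else 0) + (if e \<in> t then \<alpha> e * (w i)^2 else 0)" for e
    unfolding Q_def by (rule sum_upd[OF i])
  define D where "D = (\<lambda>e. 1/2*\<alpha> e*((L' e)^2 - (L e)^2) + 1/2*c*((if e \<in> t then \<alpha> e*(w i)^2 else 0) - (if e \<in> S i then \<alpha> e*(w i)^2 else 0)))"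
  have PhiS: "Phi_eps \<epsilon> n E w \<alpha> S = (\<Sum>e\<in>E. 1/2*(\<alpha> e*(L e)^2) + 1/2*c*Q S e)"
    unfolding Phi_eps_def L_def c_def Q_def by (simp add: sum.distrib sum_distrib_left)
  have PhiS': "Phi_eps \<epsilon> n E w \<alpha> (S(i:=t)) = (\<Sum>e\<in>E. 1/2*(\<alpha> e*(L' e)^2) + 1/2*c*Q (S(i:=t)) e)"
    unfolding Phi_eps_def L'_def c_def Q_def by (simp add: sum.distrib sum_distrib_left)
  have "Phi_eps \<epsilon> n E w \<alpha> (S(i:=t)) - Phi_eps \<epsilon> n E w \<alpha> S = (\<Sum>e\<in>E. D e)"
    unfolding PhiS PhiS' sum_subtractf[symmetric]
    by (rule sum.cong) (simp_all add: D_def QQ algebra_simps)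
  hence Dsum: "(\<Sum>e\<in>E. D e) \<ge> 0" using locmin i t by force
  define g where "g = (\<lambda>e. if e \<in> S i then \<alpha> e * L e else 0)"
  define h where "h = (\<lambda>e. if e \<in> t then \<alpha> e * L' e else 0)"
  have pt: "g e - (1+\<epsilon>) * h e \<le> -((1+\<epsilon>)/w i) * D e" if "e \<in> E" for e
    unfolding g_def h_def D_def c_def
    by (rule pw) (use alpha that Lnn wi eps Lge LL in auto)
  have "(\<Sum>e\<in>E. g e) - (1+\<epsilon>) * (\<Sum>e\<in>E. h e) = (\<Sum>e\<in>E. g e - (1+\<epsilon>) * h e)"
    by (simp add: sum_subtractf sum_distrib_left)
  also have "\<dots> \<le> (\<Sum>e\<in>E. -((1+\<epsilon>)/w i) * D e)" by (rule sum_mono) (use pt in auto)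
  also have "\<dots> = -((1+\<epsilon>)/w i) * (\<Sum>e\<in>E. D e)" by (simp add: sum_distrib_left)
  also have "\<dots> \<le> 0" using Dsum wi eps by (simp add: mult_nonneg_nonneg)
  finally have main: "(\<Sum>e\<in>E. g e) \<le> (1+\<epsilon>) * (\<Sum>e\<in>E. h e)" by simp
  have gs: "(\<Sum>e\<in>E. g e) = (\<Sum>e\<in>S i. \<alpha> e * L e)"
    unfolding g_def using sum.inter_restrict[OF fE, of "\<lambda>e. \<alpha> e * L e" "S i"] sE
    by (simp add: Int_absorb1)
  have hs: "(\<Sum>e\<in>E. h e) = (\<Sum>e\<in>t. \<alpha> e * L' e)"
    unfolding h_def using sum.inter_restrict[OF fE, of "\<lambda>e. \<alpha> e * L' e" t] tE
    by (simp add: Int_absorb1)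
  show "(\<Sum>e\<in>S i. \<alpha> e * congestion n w S e) \<le> (1 + \<epsilon>) * (\<Sum>e\<in>(S(i := t)) i. \<alpha> e * congestion n w (S(i := t)) e)"
    using main gs hs unfolding L_def L'_def by simp
qed
end
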